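(* Let $1<K<n$, $\|\cdot\|_s$ a sign- and permutation-invariant norm on $\mathbb{R}^n$, and $x\in\mathbb{R}^n$. Then $u(x)$ is an optimal solution of $$\min\ \|u\|_s\quad\text{s.t. } u_1\ge\dots\ge u_K\ge0,\ u_{K+1}=\dots=u_n=0,\ u\ge_{wm}|x|.$$
   Context: A norm is sign- and permutation-invariant if it is unchanged under permuting entries and under changing signs of entries. $|x|$ is the componentwise absolute value; $v_{[i]}$ is the $i$-th largest entry of $v$; $a\ge_{wm}b$ means $\sum_{i=1}^j a_{[i]}\ge\sum_{i=1}^j b_{[i]}$ for all $j=1,\dots,n$. $s(x)_i=\frac{\sum_{j=i}^n|x|_{[j]}}{K-i+1}$ ($i=1,\dots,K$); $i_x$ is the smallest index in $\{1,\dots,K\}$ minimizing $s(x)_i$; $\delta(x)=s(x)_{i_x}$; $u(x)_i=|x|_{[i]}$ for $i<i_x$, $u(x)_i=\delta(x)$ for $i_x\le i\le K$, $u(x)_i=0$ for $i>K$. *)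

theory Defs
  imports Complex_Main "HOL-Library.Multiset"
begin

text \<open>Vectors in R^n are represented as real lists of length n; the paper's
  1-based entry v_i is the list entry v ! (i - 1).\<close>

definition absv :: "real list \<Rightarrow> real list" where
  "absv x = map abs x"

definition dec_entry :: "real list \<Rightarrow> nat \<Rightarrow> real" where
  "dec_entry v i = rev (sort v) ! (i - 1)"

definition wmaj :: "nat \<Rightarrow> real list \<Rightarrow> real list \<Rightarrow> bool" where
  "wmaj n a b \<longleftrightarrow> (\<forall>j\<in>{1..n}. (\<Sum>i=1..j. dec_entry a i) \<ge> (\<Sum>i=1..j. dec_entry b i))"

definition is_norm_on :: "nat \<Rightarrow> (real list \<Rightarrow> real) \<Rightarrow> bool" where
  "is_norm_on n N \<longleftrightarrow>
     (\<forall>x. length x = n \<longrightarrow> N x \<ge> 0) \<and>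
     (\<forall>x. length x = n \<longrightarrow> (N x = 0 \<longleftrightarrow> x = replicate n 0)) \<and>
     (\<forall>x c. length x = n \<longrightarrow> N (map (\<lambda>t. c * t) x) = \<bar>c\<bar> * N x) \<and>
     (\<forall>x y. length x = n \<longrightarrow> length y = n \<longrightarrow> N (map2 (+) x y) \<le> N x + N y)"

definition sign_invariant :: "nat \<Rightarrow> (real list \<Rightarrow> real) \<Rightarrow> bool" where
  "sign_invariant n N \<longleftrightarrow>
     (\<forall>x s. length x = n \<longrightarrow> length s = n \<longrightarrow> set s \<subseteq> {-1, 1} \<longrightarrow>
        N (map2 (*) s x) = N x)"

definition perm_invariant :: "nat \<Rightarrow> (real list \<Rightarrow> real) \<Rightarrow> bool" where
  "perm_invariant n N \<longleftrightarrow>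
     (\<forall>x y. length x = n \<longrightarrow> mset y = mset x \<longrightarrow> N y = N x)"

definition sval :: "nat \<Rightarrow> nat \<Rightarrow> real list \<Rightarrow> nat \<Rightarrow> real" where
  "sval n K x i = (\<Sum>j=i..n. dec_entry (absv x) j) / (real K - real i + 1)"

definition ix :: "nat \<Rightarrow> nat \<Rightarrow> real list \<Rightarrow> nat" where
  "ix n K x = (LEAST i. i \<in> {1..K} \<and> (\<forall>j\<in>{1..K}. sval n K x i \<le> sval n K x j))"

definition delta :: "nat \<Rightarrow> nat \<Rightarrow> real list \<Rightarrow> real" where
  "delta n K x = sval n K x (ix n K x)"

definition uvec :: "nat \<Rightarrow> nat \<Rightarrow> real list \<Rightarrow> real list" where
  "uvec n K x = map (\<lambda>i. if i < ix n K x then dec_entry (absv x) i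
                         else if i \<le> K then delta n K x else 0) [1..<n+1]"

definition feasible :: "nat \<Rightarrow> nat \<Rightarrow> real list \<Rightarrow> real list \<Rightarrow> bool" where
  "feasible n K x u \<longleftrightarrow> length u = n \<and>
     (\<forall>i. 1 \<le> i \<and> i < K \<longrightarrow> u ! (i - 1) \<ge> u ! i) \<and> u ! (K - 1) \<ge> 0 \<and>
     (\<forall>i. K < i \<and> i \<le> n \<longrightarrow> u ! (i - 1) = 0) \<and>
     wmaj n u (absv x)"

end

theory Submission imports Defs begin

lemma norm_convex:
  assumes nrm: "is_norm_on n N" and lx: "length x = n" and ly: "length y = n"
    and t0: "0 \<le> t" and t1: "t \<le> 1"
  shows "N (map2 (\<lambda>a b. t*a + (1-t)*b) x y) \<le> t * N x + (1-t) * N y"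
proof -
  have e: "map2 (\<lambda>a b. t*a + (1-t)*b) x y = map2 (+) (map (\<lambda>z. t*z) x) (map (\<lambda>z. (1-t)*z) y)"
    by (rule nth_equalityI) (simp_all add: lx ly)
  have hom: "\<And>a c. length a = n \<Longrightarrow> N (map (\<lambda>z. c*z) a) = \<bar>c\<bar> * N a"
    using nrm unfolding is_norm_on_def by blast
  have tri: "\<And>a b. length a = n \<Longrightarrow> length b = n \<Longrightarrow> N (map2 (+) a b) \<le> N a + N b"
    using nrm unfolding is_norm_on_def by blast
  have "N (map2 (+) (map (\<lambda>z. t*z) x) (map (\<lambda>z. (1-t)*z) y)) \<le> N (map (\<lambda>z. t*z) x) + N (map (\<lambda>z. (1-t)*z) y)"
    by (rule tri) (simp_all add: lx ly)
  also have "N (map (\<lambda>z. t*z) x) + N (map (\<lambda>z. (1-t)*z) y) = t * N x + (1-t) * N y"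
    using hom[OF lx, of t] hom[OF ly, of "1-t"] t0 t1 by simp
  finally show ?thesis using e by simp
qed

lemma norm_swap:
  assumes "perm_invariant n N" "length x = n" "j < n" "k < n"
  shows "N (x[j := x!k, k := x!j]) = N x"
proof -
  have pi: "\<And>y. mset y = mset x \<Longrightarrow> N y = N x"
    using assms(1,2) unfolding perm_invariant_def by blast
  show ?thesis by (rule pi) (rule mset_swap, use assms in simp_all)
qed

lemma norm_flip:
  assumes "sign_invariant n N" "length x = n" "i < n"
  shows "N (x[i := - (x!i)]) = N x"
proof -
  let ?s = "map (\<lambda>l. if l = i then -1 else (1::real)) [0..<n]"
  have "map2 (*) ?s x = x[i := - (x!i)]"
    by (rule nth_equalityI) (auto simp: assms nth_list_update)
  moreover have "set ?s \<subseteq> {-1,1}" by auto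
  moreover have "length ?s = n" by simp
  moreover have si: "\<And>s. length s = n \<Longrightarrow> set s \<subseteq> {-1, 1} \<Longrightarrow> N (map2 (*) s x) = N x"
    using assms(1,2) unfolding sign_invariant_def by blast
  ultimately show ?thesis by metis
qed

lemma norm_scale:
  assumes nrm: "is_norm_on n N" and sg: "sign_invariant n N" and lx: "length x = n" and i: "i < n"
    and c: "\<bar>c\<bar> \<le> 1"
  shows "N (x[i := c * (x!i)]) \<le> N x"
proof -
  define t where "t = (1 + c) / 2"
  have t0: "0 \<le> t" "t \<le> 1" using c by (auto simp: t_def)
  have e: "x[i := c * (x!i)] = map2 (\<lambda>a b. t*a + (1-t)*b) x (x[i := - (x!i)])"
  proof (rule nth_equalityI)
    show "length (x[i := c * (x!i)]) = length (map2 (\<lambda>a b. t*a + (1-t)*b) x (x[i := - (x!i)]))"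
      using lx by simp
    fix l assume "l < length (x[i := c * (x!i)])"
    then have l: "l < n" using lx by simp
    show "x[i := c * (x!i)] ! l = map2 (\<lambda>a b. t*a + (1-t)*b) x (x[i := - (x!i)]) ! l"
      by (cases "l = i") (use l lx i in \<open>auto simp: t_def field_simps\<close>)
  qed
  have "N (map2 (\<lambda>a b. t*a + (1-t)*b) x (x[i := - (x!i)])) \<le> t * N x + (1-t) * N (x[i := - (x!i)])"
    by (rule norm_convex[OF nrm lx _ t0]) (simp add: lx)
  also have "\<dots> = N x" using norm_flip[OF sg lx i] by (simp add: algebra_simps)
  finally show ?thesis using e by simp
qed

lemma norm_scale':
  assumes nrm: "is_norm_on n N" and sg: "sign_invariant n N" and lx: "length x = n" and i: "i < n"
    and y: "\<bar>y\<bar> \<le> \<bar>x!i\<bar>"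
  shows "N (x[i := y]) \<le> N x"
proof (cases "x!i = 0")
  case True
  then have "y = 0" using y by simp
  then have "x[i := y] = x" using True by (metis list_update_id)
  then show ?thesis by simp
next
  case False
  have c: "\<bar>y / x!i\<bar> \<le> 1" using y False by (simp add: abs_divide)
  have "y = (y / x!i) * x!i" using False by simp
  then have "x[i := y] = x[i := (y / x!i) * x!i]" by metis
  then show ?thesis using norm_scale[OF nrm sg lx i c] by simp
qed

lemma norm_mono:
  assumes nrm: "is_norm_on n N" and sg: "sign_invariant n N" and lu: "length u = n" and lv: "length v = n"
    and le: "\<forall>i<n. \<bar>u!i\<bar> \<le> \<bar>v!i\<bar>"
  shows "N u \<le> N v"
proof -
  have "m \<le> n \<Longrightarrow> N (take m u @ drop m v) \<le> N v" for m
  proof (induction m)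
    case 0 then show ?case by simp
  next
    case (Suc m)
    let ?w = "take m u @ drop m v"
    have lw: "length ?w = n" using Suc lu lv by simp
    have wm: "?w ! m = v ! m" using Suc lu lv by (simp add: nth_append)
    have e: "take (Suc m) u @ drop (Suc m) v = ?w[m := u!m]"
    proof -
      have mn': "m < n" using Suc.prems by simp
      have "take (Suc m) u = take m u @ [u!m]" using mn' lu by (simp add: take_Suc_conv_app_nth)
      moreover have "drop m v = v!m # drop (Suc m) v" using mn' lv by (simp add: Cons_nth_drop_Suc)
      moreover have "length (take m u) = m" using mn' lu by simp
      ultimately show ?thesis by (simp add: list_update_append)
    qed
    have mn: "m < n" using Suc.prems by simp
    have "N (?w[m := u!m]) \<le> N ?w"
      by (rule norm_scale'[OF nrm sg lw mn]) (use le mn wm in simp)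
    then show ?case using Suc e by simp
  qed
  from this[of n] show ?thesis using lu lv by simp
qed

lemma norm_transfer:
  assumes nrm: "is_norm_on n N" and pm: "perm_invariant n N" and lv: "length v = n"
    and j: "j < n" and k: "k < n" and jk: "j \<noteq> k" and e0: "0 \<le> e" and e1: "e \<le> v!j - v!k"
  shows "N (v[j := v!j - e, k := v!k + e]) \<le> N v"
proof (cases "v!j = v!k")
  case True
  then have "e = 0" using e0 e1 by simp
  then show ?thesis by simp
next
  case False
  then have d: "v!j - v!k > 0" using e0 e1 by simp
  define l where "l = e / (v!j - v!k)"
  have l01: "0 \<le> 1 - l" "1 - l \<le> 1" using d e0 e1 by (auto simp: l_def)
  let ?s = "v[j := v!k, k := v!j]"
  have ls: "length ?s = n" using lv by simp
  have ee: "e = l * (v!j - v!k)" using d by (simp add: l_def)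
  have eq: "v[j := v!j - e, k := v!k + e] = map2 (\<lambda>a b. (1-l)*a + (1-(1-l))*b) v ?s"
  proof (rule nth_equalityI)
    show "length (v[j := v!j - e, k := v!k + e]) = length (map2 (\<lambda>a b. (1-l)*a + (1-(1-l))*b) v ?s)"
      using lv by simp
    fix i assume "i < length (v[j := v!j - e, k := v!k + e])"
    then have i: "i < n" using lv by simp
    show "v[j := v!j - e, k := v!k + e] ! i = map2 (\<lambda>a b. (1-l)*a + (1-(1-l))*b) v ?s ! i"
    proof (cases "i = j")
      case True
      then have "v[j := v!j - e, k := v!k + e] ! i = v!j - e" using jk j lv by simp
      moreover have "map2 (\<lambda>a b. (1-l)*a + (1-(1-l))*b) v ?s ! i = (1-l)*v!j + l * v!k"
        using True jk j k lv by simp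
      ultimately show ?thesis unfolding ee by (simp add: algebra_simps)
    next
      case F: False
      show ?thesis
      proof (cases "i = k")
        case True
        then have "v[j := v!j - e, k := v!k + e] ! i = v!k + e" using jk k lv by simp
        moreover have "map2 (\<lambda>a b. (1-l)*a + (1-(1-l))*b) v ?s ! i = (1-l)*v!k + l * v!j"
          using True jk j k lv by simp
        ultimately show ?thesis unfolding ee by (simp add: algebra_simps)
      next
        case False
        then show ?thesis using F i lv by (simp add: algebra_simps)
      qed
    qed
  qed
  have "N (map2 (\<lambda>a b. (1-l)*a + (1-(1-l))*b) v ?s) \<le> (1-l) * N v + (1-(1-l)) * N ?s"
    by (rule norm_convex[OF nrm lv ls l01])
  also have "\<dots> = N v" using norm_swap[OF pm lv j k] by (simp add: algebra_simps)
  finally show ?thesis using eq by simp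
qed

lemma wmaj_norm:
  assumes nrm: "is_norm_on n N" and sg: "sign_invariant n N" and pm: "perm_invariant n N"
    and lu: "length u = n" and um: "\<forall>i j. i \<le> j \<longrightarrow> j < n \<longrightarrow> u!j \<le> u!i"
    and un: "\<forall>i<n. 0 \<le> u!i"
  shows "length v = n \<Longrightarrow> (\<forall>m\<le>n. (\<Sum>i<m. u!i) \<le> (\<Sum>i<m. v!i)) \<Longrightarrow> N u \<le> N v"
proof (induction "card {i. i<n \<and> u!i \<noteq> v!i}" arbitrary: v rule: less_induct)
  case less
  note lv = less.prems(1) and pre = less.prems(2)
  show ?case
  proof (cases "\<forall>i<n. u!i \<le> v!i")
    case True
    show ?thesis
      by (rule norm_mono[OF nrm sg lu lv]) (use True un in auto)
  next
    case False
    then obtain k0 where k0: "k0 < n \<and> v!k0 < u!k0" by (auto simp: not_le)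
    define k where "k = (LEAST k. k < n \<and> v!k < u!k)"
    have k: "k < n \<and> v!k < u!k" unfolding k_def by (rule LeastI[of _ k0]) (rule k0)
    have kmin: "u!i \<le> v!i" if "i < k" for i
    proof -
      have "\<not> (i < n \<and> v!i < u!i)" using not_less_Least[OF that[unfolded k_def]] .
      then show ?thesis using that k by auto
    qed
    have "(\<Sum>i<Suc k. u!i) \<le> (\<Sum>i<Suc k. v!i)" using pre[rule_format, of "Suc k"] k by (simp add: Suc_le_eq)
    then have sk: "(\<Sum>i<k. u!i) < (\<Sum>i<k. v!i)" using k by simp
    have ex: "\<exists>j. j < k \<and> u!j < v!j"
    proof (rule ccontr)
      assume A: "\<not> (\<exists>j. j < k \<and> u!j < v!j)"
      have "v!i \<le> u!i" if "i \<in> {..<k}" for i using A that by (meson lessThan_iff not_less)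
      then have "(\<Sum>i<k. v!i) \<le> (\<Sum>i<k. u!i)" by (intro sum_mono)
      then show False using sk by simp
    qed
    then obtain j0 where j0: "j0 < k \<and> u!j0 < v!j0" by blast
    define j where "j = (GREATEST j. j < k \<and> u!j < v!j)"
    have bnd: "\<And>y. y < k \<and> u!y < v!y \<Longrightarrow> y \<le> k" by auto
    have j: "j < k \<and> u!j < v!j" unfolding j_def by (rule GreatestI_nat[where P="\<lambda>j. j < k \<and> u!j < v!j", OF j0 bnd])
    have mid: "u!i = v!i" if "j < i" "i < k" for i
    proof -
      have "\<not> (u!i < v!i)"
      proof
        assume "u!i < v!i"
        then have "i \<le> j" unfolding j_def using that by (intro Greatest_le_nat[where P="\<lambda>j. j < k \<and> u!j < v!j", OF _ bnd]) auto
        then show False using that by simp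
      qed
      then show ?thesis using kmin[OF that(2)] by simp
    qed
    define e where "e = min (v!j - u!j) (u!k - v!k)"
    have jk: "j \<noteq> k" "j < n" using j k by auto
    have e0: "0 < e" using j k by (simp add: e_def)
    have ukj: "u!k \<le> u!j" using um j k by auto
    have "e \<le> v!j - u!j" "e \<le> u!k - v!k" by (simp_all add: e_def)
    then have e1: "e \<le> v!j - v!k" using ukj e0 by linarith
    define v' where "v' = v[j := v!j - e, k := v!k + e]"
    have Nv': "N v' \<le> N v" unfolding v'_def
      by (rule norm_transfer[OF nrm pm lv]) (use jk k e0 e1 in auto)
    have lv': "length v' = n" using lv by (simp add: v'_def)
    have v'nth: "v'!i = v!i + (if i = k then e else 0) - (if i = j then e else 0)" if "i < n" for i
      using that lv jk by (auto simp: v'_def nth_list_update)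
    have card: "card {i. i<n \<and> u!i \<noteq> v'!i} < card {i. i<n \<and> u!i \<noteq> v!i}"
    proof (rule psubset_card_mono)
      show "finite {i. i<n \<and> u!i \<noteq> v!i}" by simp
      have sub: "{i. i<n \<and> u!i \<noteq> v'!i} \<subseteq> {i. i<n \<and> u!i \<noteq> v!i}"
      proof
        fix i assume "i \<in> {i. i<n \<and> u!i \<noteq> v'!i}"
        then have i: "i < n" "u!i \<noteq> v'!i" by auto
        show "i \<in> {i. i<n \<and> u!i \<noteq> v!i}"
        proof (cases "i = j \<or> i = k")
          case True then show ?thesis using i j k by auto
        next
          case False then show ?thesis using i v'nth[OF i(1)] by auto
        qed
      qed
      have "j \<notin> {i. i<n \<and> u!i \<noteq> v'!i} \<or> k \<notin> {i. i<n \<and> u!i \<noteq> v'!i}"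
      proof (cases "v!j - u!j \<le> u!k - v!k")
        case True
        then have "e = v!j - u!j" by (simp add: e_def)
        then have "v'!j = u!j" using v'nth[OF jk(2)] jk by simp
        then show ?thesis by simp
      next
        case False
        then have "e = u!k - v!k" by (simp add: e_def)
        then have "v'!k = u!k" using v'nth k jk by simp
        then show ?thesis by simp
      qed
      moreover have "j \<in> {i. i<n \<and> u!i \<noteq> v!i}" "k \<in> {i. i<n \<and> u!i \<noteq> v!i}"
        using j k jk by auto
      ultimately show "{i. i<n \<and> u!i \<noteq> v'!i} \<subset> {i. i<n \<and> u!i \<noteq> v!i}"
        using sub by blast
    qed
    have pre': "\<forall>m\<le>n. (\<Sum>i<m. u!i) \<le> (\<Sum>i<m. v'!i)"
    proof (intro allI impI)
      fix m assume m: "m \<le> n"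
      have "(\<Sum>i<m. v'!i) = (\<Sum>i<m. v!i + (if i = k then e else 0) - (if i = j then e else 0))"
      proof (rule sum.cong[OF refl])
        fix i assume "i \<in> {..<m}"
        then show "v'!i = v!i + (if i = k then e else 0) - (if i = j then e else 0)"
          using m by (intro v'nth) auto
      qed
      also have "\<dots> = (\<Sum>i<m. v!i) + (if k < m then e else 0) - (if j < m then e else 0)"
        by (simp add: sum.distrib sum_subtractf)
      finally have sv': "(\<Sum>i<m. v'!i) = (\<Sum>i<m. v!i) + (if k < m then e else 0) - (if j < m then e else 0)" .
      show "(\<Sum>i<m. u!i) \<le> (\<Sum>i<m. v'!i)"
      proof (cases "m \<le> j \<or> k < m")
        case True
        then show ?thesis using sv' pre m j by auto
      next
        case False
        then have jm: "j < m" "m \<le> k" by auto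
        have "(\<Sum>i<m. v!i - u!i) = (\<Sum>i<Suc j. v!i - u!i) + (\<Sum>i\<in>{Suc j..<m}. v!i - u!i)"
          using jm by (metis Suc_leI atLeast0LessThan sum.atLeastLessThan_concat zero_le)
        also have "(\<Sum>i\<in>{Suc j..<m}. v!i - u!i) = 0"
          using jm by (intro sum.neutral ballI) (simp add: mid[symmetric])
        also have "(\<Sum>i<Suc j. v!i - u!i) = (\<Sum>i<j. v!i - u!i) + (v!j - u!j)" by simp
        also have "(\<Sum>i<j. v!i - u!i) \<ge> 0" using pre jk m by (simp add: sum_subtractf)
        ultimately have "(\<Sum>i<m. v!i - u!i) \<ge> e" by (simp add: e_def)
        then show ?thesis using sv' jm j by (simp add: sum_subtractf)
      qed
    qed
    have "N u \<le> N v'" using less.hyps[OF card lv' pre'] .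
    then show ?thesis using Nv' by simp
  qed
qed

lemma desc_chain:
  fixes v :: "real list" and i j :: nat
  assumes "\<forall>i. Suc i < length v \<longrightarrow> v!(Suc i) \<le> v!i"
  shows "i \<le> j \<Longrightarrow> j < length v \<Longrightarrow> v!j \<le> v!i"
proof (induction j)
  case 0 then show ?case by simp
next
  case (Suc j)
  show ?case
  proof (cases "i = Suc j")
    case True then show ?thesis by simp
  next
    case False
    then have "v!j \<le> v!i" using Suc by simp
    moreover have "v!(Suc j) \<le> v!j" using assms Suc.prems by simp
    ultimately show ?thesis by simp
  qed
qed

lemma dec_entry_sorted:
  fixes v :: "real list"
  assumes "\<forall>i j. i \<le> j \<longrightarrow> j < length v \<longrightarrow> v!j \<le> v!i" and "1 \<le> i"
  shows "dec_entry v i = v!(i-1)"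
proof -
  have "sorted (rev v)" unfolding sorted_iff_nth_mono
    using assms(1) by (auto simp: rev_nth)
  then have "sort v = rev v" by (intro properties_for_sort) simp_all
  then show ?thesis by (simp add: dec_entry_def)
qed

lemma sum_shift1: "(\<Sum>i=1..j. f (i-1)) = (\<Sum>i<j. (f (i::nat) :: real))"
  by (induction j) (simp_all add: sum.cl_ivl_Suc)

lemma sum_shift2: "1 \<le> i \<Longrightarrow> (\<Sum>j=i..n. f (j-1)) = (\<Sum>j=i-1..<n. (f (j::nat) :: real))"
proof (induction n)
  case 0 then show ?case by simp
next
  case (Suc n)
  show ?case
  proof (cases "i \<le> Suc n")
    case True
    then have "(\<Sum>j=i..Suc n. f (j-1)) = (\<Sum>j=i..n. f (j-1)) + f n" by (simp add: sum.cl_ivl_Suc)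
    moreover have "(\<Sum>j=i-1..<Suc n. f j) = (\<Sum>j=i-1..<n. f j) + f n" using True by (intro sum.atLeastLessThan_Suc) simp
    ultimately show ?thesis using Suc by simp
  next
    case False then show ?thesis by simp
  qed
qed

lemma sum_concat: "(a::nat) \<le> b \<Longrightarrow> (\<Sum>i<b. f i) = (\<Sum>i<a. f i) + (\<Sum>i\<in>{a..<b}. (f i :: real))"
  using sum.atLeastLessThan_concat[of 0 a b f] by (simp add: lessThan_atLeast0)

lemma dec_sum:
  fixes w :: "real list"
  assumes "\<forall>i j. i \<le> j \<longrightarrow> j < length w \<longrightarrow> w!j \<le> w!i"
  shows "(\<Sum>i=1..j. dec_entry w i) = (\<Sum>i<j. w!i)"
proof -
  have "(\<Sum>i=1..j. dec_entry w i) = (\<Sum>i=1..j. w!(i-1))"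
    by (rule sum.cong) (auto simp: dec_entry_sorted[OF assms])
  then show ?thesis using sum_shift1[of "\<lambda>i. w!i" j] by simp
qed

lemma key_alg:
  fixes a b c X Y B A d :: real
  assumes a: "0 \<le> a" and b: "0 \<le> b" and ab: "0 < a + b"
    and hX: "a * c \<le> X" and hY: "Y \<le> b * c" and hB: "A \<le> B"
    and hT: "A + (a + b) * d \<le> B + X + Y"
  shows "A + a * d \<le> B + X"
proof -
  have h2: "b * (a * c) \<le> b * X" using mult_left_mono[OF hX b] .
  have h3: "a * Y \<le> a * (b * c)" using mult_left_mono[OF hY a] .
  have h5: "a * (A + (a + b) * d - B) \<le> a * (X + Y)" using mult_left_mono[OF _ a] hT by simp
  have h6: "b * A \<le> b * B" using mult_left_mono[OF hB b] .
  have "(a + b) * (A + a * d) \<le> (a + b) * (B + X)"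
    using h2 h3 h5 h6 by (simp add: algebra_simps)
  then show ?thesis using ab by (simp add: mult_le_cancel_left_pos)
qed

theorem mainTheorem8:
  fixes n K :: nat and N :: "real list \<Rightarrow> real" and x :: "real list"
  assumes "1 < K" and "K < n"
    and "is_norm_on n N" and "sign_invariant n N" and "perm_invariant n N"
    and "length x = n"
  shows "feasible n K x (uvec n K x) \<and>
         (\<forall>v. feasible n K x v \<longrightarrow> N (uvec n K x) \<le> N v)"
proof -
  note K1 = assms(1) and Kn = assms(2) and nrm = assms(3) and sg = assms(4) and pm = assms(5)
    and lx = assms(6)
  define al where "al = rev (sort (absv x))"
  have lal: "length al = n" using lx by (simp add: al_def absv_def)
  have al_desc: "\<forall>i j. i \<le> j \<longrightarrow> j < n \<longrightarrow> al!j \<le> al!i"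
  proof (intro allI impI)
    fix i j assume ij: "i \<le> j" "j < n"
    have s: "sorted (sort (absv x))" by simp
    have l2: "length (sort (absv x)) = n" using lx by (simp add: absv_def)
    have "sort (absv x) ! (n - Suc j) \<le> sort (absv x) ! (n - Suc i)"
      using ij l2 by (intro sorted_nth_mono[OF s]) auto
    then show "al!j \<le> al!i" using ij l2 by (simp add: al_def rev_nth)
  qed
  have al_nn: "\<forall>i<n. 0 \<le> al!i"
  proof (intro allI impI)
    fix i assume "i < n"
    then have "al!i \<in> set al" using lal by simp
    then show "0 \<le> al!i" by (auto simp: al_def absv_def)
  qed
  have dec_al: "dec_entry (absv x) i = al!(i-1)" for i by (simp add: dec_entry_def al_def)
  define S where "S j = (\<Sum>i=j..<n. al!i)" for j
  have S_nn: "0 \<le> S j" for j unfolding S_def using al_nn by (intro sum_nonneg) auto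
  have sval_eq: "sval n K x i = S (i-1) / (real K - real i + 1)" if "1 \<le> i" for i
    unfolding sval_def S_def dec_al using sum_shift2[OF that, of "\<lambda>j. al!j" n] by simp
  define P where "P i = (i \<in> {1..K} \<and> (\<forall>j\<in>{1..K}. sval n K x i \<le> sval n K x j))" for i
  have exP: "\<exists>i. P i"
  proof -
    let ?M = "Min (sval n K x ` {1..K})"
    have fin: "finite (sval n K x ` {1..K})" "sval n K x ` {1..K} \<noteq> {}" using K1 by auto
    obtain i0 where "i0 \<in> {1..K}" "sval n K x i0 = ?M" using Min_in[OF fin] by auto
    moreover have "\<forall>j\<in>{1..K}. ?M \<le> sval n K x j" using fin by auto
    ultimately show ?thesis unfolding P_def by auto
  qed
  define p where "p = ix n K x"
  have pP: "P p" unfolding p_def ix_def P_def[symmetric] by (rule LeastI_ex[OF exP])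
  have p1: "1 \<le> p" "p \<le> K" using pP by (auto simp: P_def)
  have pmin: "sval n K x p < sval n K x i" if "1 \<le> i" "i < p" for i
  proof -
    have "\<not> P i" using not_less_Least[of i P] that unfolding p_def ix_def P_def[symmetric] by simp
    moreover have iK: "i \<in> {1..K}" using that p1 by auto
    ultimately have "\<exists>j\<in>{1..K}. sval n K x j < sval n K x i" unfolding P_def by (auto simp: not_le)
    then obtain j where "j \<in> {1..K}" "sval n K x j < sval n K x i" by blast
    moreover have "sval n K x p \<le> sval n K x j" using pP \<open>j \<in> {1..K}\<close> by (auto simp: P_def)
    ultimately show ?thesis by simp
  qed
  define q where "q = p - 1"
  have qK: "q < K" and pq: "p = Suc q" using p1 by (auto simp: q_def)
  define \<delta> where "\<delta> = delta n K x"
  have \<delta>p: "\<delta> = sval n K x p" by (simp add: \<delta>_def delta_def p_def)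
  have Lpos: "real K - real p + 1 = real (K - q)" using qK pq by (simp add: of_nat_diff)
  have F1: "real (K - q) * \<delta> = S q"
    using \<delta>p sval_eq[OF p1(1)] Lpos qK pq by simp
  have F2: "real (K - j) * \<delta> \<le> S j" if "q \<le> j" "j \<le> K" for j
  proof (cases "j = K")
    case True then show ?thesis using S_nn by simp
  next
    case False
    then have jK: "j < K" using that by simp
    have "\<delta> \<le> sval n K x (Suc j)" using pP jK \<delta>p by (auto simp: P_def)
    also have "sval n K x (Suc j) = S j / real (K - j)" using sval_eq[of "Suc j"] jK by (simp add: of_nat_diff)
    finally show ?thesis using jK by (simp add: field_simps)
  qed
  have Lp: "0 < real (K - q)" using qK by simp
  have "0 \<le> real (K - q) * \<delta>" using F1 S_nn[of q] by simp
  then have F4: "0 \<le> \<delta>" using Lp by (simp add: zero_le_mult_iff)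
  have F3: "\<delta> < al!(q-1)" if "1 \<le> q"
  proof -
    have "sval n K x p < sval n K x q" using pmin[of q] that pq by simp
    also have "sval n K x q = S (q-1) / real (K - q + 1)"
      using sval_eq[OF that] qK by (simp add: of_nat_diff)
    also have "S (q-1) = al!(q-1) + S q"
      unfolding S_def using that qK Kn by (subst sum.atLeast_Suc_lessThan) auto
    finally have "\<delta> < (al!(q-1) + S q) / real (K - q + 1)" using \<delta>p by simp
    then have "\<delta> * real (K - q + 1) < al!(q-1) + S q" by (simp add: field_simps)
    then show ?thesis using F1 qK by (simp add: algebra_simps of_nat_diff)
  qed
  define u where "u = uvec n K x"
  have lu: "length u = n" by (simp add: u_def uvec_def)
  have unth: "u!i = (if i < q then al!i else if i < K then \<delta> else 0)" if "i < n" for i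
  proof -
    have e1: "[1..<n+1] ! i = Suc i" using that by (simp add: nth_upt del: upt_Suc)
    have "u!i = (\<lambda>i. if i < ix n K x then dec_entry (absv x) i
                         else if i \<le> K then delta n K x else 0) ([1..<n+1] ! i)"
      unfolding u_def uvec_def using that by (simp del: upt_Suc)
    then have "u!i = (if Suc i < p then dec_entry (absv x) (Suc i) else if Suc i \<le> K then \<delta> else 0)"
      unfolding e1 by (simp add: p_def \<delta>_def)
    then show ?thesis using pq by (simp add: dec_al)
  qed
  have u_step: "\<forall>i. Suc i < length u \<longrightarrow> u!(Suc i) \<le> u!i"
  proof (intro allI impI)
    fix i assume "Suc i < length u"
    then have i: "Suc i < n" using lu by simp
    show "u!(Suc i) \<le> u!i"
    proof (cases "Suc i < q")
      case True then show ?thesis using unth i al_desc by simp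
    next
      case F: False
      show ?thesis
      proof (cases "Suc i = q")
        case True
        have "1 \<le> q" using True by simp
        then have "\<delta> < al!(q-1)" by (rule F3)
        moreover have "q - 1 = i" using True by simp
        ultimately have "\<delta> < al!i" by simp
        moreover have "u!(Suc i) = \<delta>" "u!i = al!i" using unth i True qK by auto
        ultimately show ?thesis by simp
      next
        case False then show ?thesis using unth i F F4 by auto
      qed
    qed
  qed
  have u_desc: "\<forall>i j. i \<le> j \<longrightarrow> j < n \<longrightarrow> u!j \<le> u!i"
    using desc_chain[OF u_step] lu by auto
  have u_nn: "\<forall>i<n. 0 \<le> u!i"
  proof (intro allI impI)
    fix i assume i: "i < n"
    have a: "n - 1 < n" "\<not> n - 1 < q" "\<not> n - 1 < K" using Kn qK by auto
    have "u!(n-1) = 0" using unth[OF a(1)] a(2,3) by simp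
    moreover have "u!(n-1) \<le> u!i" using u_desc[rule_format, of i "n-1"] i by simp
    ultimately show "0 \<le> u!i" by simp
  qed
  define Pa where "Pa m = (\<Sum>i<m. al!i)" for m
  define Pu where "Pu m = (\<Sum>i<m. u!i)" for m
  have PaS: "Pa j + S j = Pa n" if "j \<le> n" for j
    unfolding Pa_def S_def using sum_concat[OF that, of "\<lambda>i. al!i"] by simp
  have Pu1: "Pu m = Pa m" if "m \<le> q" for m
    unfolding Pu_def Pa_def using that qK Kn by (intro sum.cong) (auto simp: unth)
  have Pu2: "Pu m = Pa q + real (m - q) * \<delta>" if "q \<le> m" "m \<le> K" for m
  proof -
    have "Pu m = Pu q + (\<Sum>i\<in>{q..<m}. u!i)" unfolding Pu_def by (rule sum_concat[OF that(1)])
    also have "(\<Sum>i\<in>{q..<m}. u!i) = (\<Sum>i\<in>{q..<m}. \<delta>)"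
      using that Kn by (intro sum.cong) (auto simp: unth)
    finally show ?thesis using Pu1[of q] by simp
  qed
  have Pu3: "Pu m = Pa n" if "K \<le> m" "m \<le> n" for m
  proof -
    have "Pu m = Pu K + (\<Sum>i\<in>{K..<m}. u!i)" unfolding Pu_def by (rule sum_concat[OF that(1)])
    also have "(\<Sum>i\<in>{K..<m}. u!i) = 0"
      using that qK by (intro sum.neutral) (auto simp: unth)
    finally show ?thesis using Pu2[of K] qK F1 PaS[of q] Kn by simp
  qed
  have Pa_mono: "Pa m \<le> Pa n" if "m \<le> n" for m using PaS[OF that] S_nn[of m] by simp
  have PaPu: "Pa m \<le> Pu m" if "m \<le> n" for m
  proof -
    consider "m \<le> q" | "q \<le> m \<and> m \<le> K" | "K \<le> m" by linarith
    then show ?thesis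
    proof cases
      case 1 then show ?thesis using Pu1 by simp
    next
      case 2
      have "Pa m + S m = Pa q + S q" using PaS[of m] PaS[of q] 2 that qK by simp
      moreover have "real (K - q) = real (m - q) + real (K - m)" using 2 by simp
      moreover have "real (K - m) * \<delta> \<le> S m" using F2[of m] 2 by simp
      ultimately show ?thesis using Pu2[of m] 2 F1 by (simp add: algebra_simps)
    next
      case 3 then show ?thesis using Pu3 Pa_mono that by simp
    qed
  qed
  have u_desc': "\<forall>i j. i \<le> j \<longrightarrow> j < length u \<longrightarrow> u!j \<le> u!i" using u_desc lu by simp
  have sum_al: "(\<Sum>i=1..j. dec_entry (absv x) i) = Pa j" for j
    unfolding dec_al Pa_def using sum_shift1[of "\<lambda>i. al!i" j] by simp
  have feas_u: "feasible n K x u"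
    unfolding feasible_def wmaj_def
  proof (intro conjI allI impI ballI)
    show "length u = n" by (rule lu)
    fix i assume "1 \<le> i \<and> i < K"
    then show "u!i \<le> u!(i-1)" using u_desc Kn by auto
  next
    show "0 \<le> u!(K-1)" using u_nn Kn by simp
  next
    fix i assume i: "K < i \<and> i \<le> n"
    then have a: "i - 1 < n" "\<not> i - 1 < q" "\<not> i - 1 < K" using qK by auto
    show "u!(i-1) = 0" using unth[OF a(1)] a(2,3) by simp
  next
    fix j assume "j \<in> {1..n}"
    then show "(\<Sum>i=1..j. dec_entry (absv x) i) \<le> (\<Sum>i=1..j. dec_entry u i)"
      unfolding sum_al dec_sum[OF u_desc'] Pu_def[symmetric] using PaPu by simp
  qed
  have opt: "N u \<le> N v" if fv: "feasible n K x v" for v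
  proof -
    have lv: "length v = n" using fv by (simp add: feasible_def)
    have fv1: "v!i \<le> v!(i-1)" if "1 \<le> i" "i < K" for i using fv that by (simp add: feasible_def)
    have fv2: "0 \<le> v!(K-1)" using fv by (simp add: feasible_def)
    have vzero: "v!i = 0" if "K \<le> i" "i < n" for i
    proof -
      have "\<forall>i. K < i \<and> i \<le> n \<longrightarrow> v!(i-1) = 0" using fv by (simp add: feasible_def)
      from this[rule_format, of "Suc i"] show ?thesis using that by simp
    qed
    have v_step: "\<forall>i. Suc i < length v \<longrightarrow> v!(Suc i) \<le> v!i"
    proof (intro allI impI)
      fix i assume "Suc i < length v"
      then have i: "Suc i < n" using lv by simp
      show "v!(Suc i) \<le> v!i"
      proof (cases "Suc i < K")
        case True then show ?thesis using fv1[of "Suc i"] by simp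
      next
        case False
        then have "v!(Suc i) = 0" using vzero i by simp
        moreover have "0 \<le> v!i"
        proof (cases "Suc i = K")
          case True then show ?thesis using fv2 by (metis diff_Suc_1)
        next
          case False then show ?thesis using vzero \<open>\<not> Suc i < K\<close> i by simp
        qed
        ultimately show ?thesis by simp
      qed
    qed
    have v_desc': "\<forall>i j. i \<le> j \<longrightarrow> j < length v \<longrightarrow> v!j \<le> v!i"
      using desc_chain[OF v_step] by auto
    define Pv where "Pv m = (\<Sum>i<m. v!i)" for m
    have wv: "wmaj n v (absv x)" using fv by (simp add: feasible_def)
    have PaPv: "Pa m \<le> Pv m" if "m \<le> n" for m
    proof (cases "m = 0")
      case True then show ?thesis by (simp add: Pa_def Pv_def)
    next
      case False
      then have "m \<in> {1..n}" using that by simp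
      then show ?thesis using wv unfolding wmaj_def sum_al dec_sum[OF v_desc'] Pv_def by auto
    qed
    have PvK: "Pv m = Pv n" if "K \<le> m" "m \<le> n" for m
    proof -
      have "Pv n = Pv m + (\<Sum>i\<in>{m..<n}. v!i)" unfolding Pv_def by (rule sum_concat[OF that(2)])
      also have "(\<Sum>i\<in>{m..<n}. v!i) = 0" using that by (intro sum.neutral) (auto simp: vzero)
      finally show ?thesis by simp
    qed
    have pre: "\<forall>m\<le>n. (\<Sum>i<m. u!i) \<le> (\<Sum>i<m. v!i)"
    proof (intro allI impI)
      fix m assume mn: "m \<le> n"
      consider "m \<le> q" | "q < m \<and> m < K" | "K \<le> m" by linarith
      then have "Pu m \<le> Pv m"
      proof cases
        case 1 then show ?thesis using Pu1 PaPv mn by simp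
      next
        case 3
        have "Pu m = Pa n" using Pu3[OF 3 mn] .
        moreover have "Pv m = Pv n" using PvK[OF 3 mn] .
        ultimately show ?thesis using PaPv[of n] by simp
      next
        case 2
        define B where "B = Pv q"
        define X where "X = (\<Sum>i\<in>{q..<m}. v!i)"
        define Y where "Y = (\<Sum>i\<in>{m..<K}. v!i)"
        define c where "c = v!(m-1)"
        have PvM: "Pv m = B + X" unfolding B_def X_def Pv_def using 2 by (intro sum_concat) simp
        have PvKK: "Pv K = Pv m + Y" unfolding Y_def Pv_def using 2 by (intro sum_concat) simp
        have hX: "real (m - q) * c \<le> X"
        proof -
          have "real (card {q..<m}) * c \<le> X" unfolding X_def c_def
            by (rule sum_bounded_below) (use v_desc' lv 2 Kn in auto)
          then show ?thesis by simp
        qed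
        have hY: "Y \<le> real (K - m) * c"
        proof -
          have "Y \<le> real (card {m..<K}) * c" unfolding Y_def c_def
            by (rule sum_bounded_above) (use v_desc' lv 2 Kn in auto)
          then show ?thesis by simp
        qed
        have hB: "Pa q \<le> B" unfolding B_def using PaPv[of q] qK Kn by simp
        have t1: "Pa n \<le> Pv n" using PaPv[of n] by simp
        have t2: "Pv K = Pv n" using PvK[of K] Kn by simp
        have t3: "Pa q + S q = Pa n" using PaS[of q] qK Kn by simp
        have eqK: "real (K - q) = real (m - q) + real (K - m)" using 2 by (simp add: of_nat_diff)
        have hT0: "Pa q + real (K - q) * \<delta> \<le> B + X + Y" using t1 t2 t3 F1 PvM PvKK by linarith
        have hT: "Pa q + (real (m - q) + real (K - m)) * \<delta> \<le> B + X + Y"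
          using hT0 by (simp only: eqK)
        have "Pa q + real (m - q) * \<delta> \<le> B + X"
          by (rule key_alg[OF _ _ _ hX hY hB hT]) (use 2 in auto)
        then show ?thesis using Pu2[of m] PvM 2 by simp
      qed
      then show "(\<Sum>i<m. u!i) \<le> (\<Sum>i<m. v!i)" by (simp add: Pu_def Pv_def)
    qed
    show ?thesis by (rule wmaj_norm[OF nrm sg pm lu u_desc u_nn lv pre])
  qed
  show ?thesis using feas_u opt unfolding u_def by blast
qed

end
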